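(* Let $\Gamma=(V,E)$ be a locally finite reflexive relation. If $F_1$ and $F_2$ are weak fragments of $\Gamma$ with $F_1\cap F_2\neq\emptyset$, then $F_1\cup F_2$ and $F_1\cap F_2$ are weak fragments. In particular, two distinct weak atoms are disjoint. Assume furthermore that $\Gamma$ is point-transitive. Then the weak atoms of $\Gamma$ form a partition of $V$, and for any weak atom $A$ the subrelation $\Gamma[A]$ induced on $A$ is point-transitive.
   Context: A relation is a pair $\Gamma=(V,E)$ with $E\subset V\times V$; for $X\subset V$, $\Gamma(X)=\{y: (x,y)\in E \text{ for some } x\in X\}$, $\Gamma^-(X)=\{y:(y,x)\in E\text{ for some }x\in X\}$, $\Gamma(x)=\Gamma(\{x\})$. $\Gamma$ is reflexive if $(x,x)\in E$ for all $x$, and locally finite if $\Gamma(x)$ and $\Gamma^-(x)$ are finite for all $x\in V$. Write $\partial(X)=\Gamma(X)\setminus X$. An automorphism is a bijection $f:V\to V$ with $\Gamma(f(x))=f(\Gamma(x))$ for all $x$; $\Gamma$ is point-transitive if for all $x,y\in V$ there is an automorphism $f$ with $f(x)=y$. The induced subrelation on $X$ is $\Gamma[X]=(X,(X\times X)\cap E)$. The weak connectivity is $\kappa(\Gamma)=\min\{|\partial(X)| : 1\le |X|<\infty\}$; a weak fragment is a set $X$ with $1\le|X|<\infty$ and $|\partial(X)|=\kappa(\Gamma)$; a weak atom is a weak fragment of minimum cardinality. *)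

theory Defs
  imports Main "HOL-Library.Disjoint_Sets"
begin

definition is_relation :: "'a set \<Rightarrow> ('a \<times> 'a) set \<Rightarrow> bool" where
  "is_relation V E \<longleftrightarrow> E \<subseteq> V \<times> V"

definition reflexive_rel :: "'a set \<Rightarrow> ('a \<times> 'a) set \<Rightarrow> bool" where
  "reflexive_rel V E \<longleftrightarrow> (\<forall>x\<in>V. (x, x) \<in> E)"

text \<open>Gamma(X) is E `` X, Gamma^-(X) is (E^-1) `` X.\<close>
definition locally_finite_rel :: "'a set \<Rightarrow> ('a \<times> 'a) set \<Rightarrow> bool" where
  "locally_finite_rel V E \<longleftrightarrow> (\<forall>x\<in>V. finite (E `` {x}) \<and> finite (E\<inverse> `` {x}))"

definition bdry :: "('a \<times> 'a) set \<Rightarrow> 'a set \<Rightarrow> 'a set" where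
  "bdry E X = E `` X - X"

definition automorphism :: "'a set \<Rightarrow> ('a \<times> 'a) set \<Rightarrow> ('a \<Rightarrow> 'a) \<Rightarrow> bool" where
  "automorphism V E f \<longleftrightarrow> bij_betw f V V \<and> (\<forall>x\<in>V. E `` {f x} = f ` (E `` {x}))"

definition point_transitive :: "'a set \<Rightarrow> ('a \<times> 'a) set \<Rightarrow> bool" where
  "point_transitive V E \<longleftrightarrow> (\<forall>x\<in>V. \<forall>y\<in>V. \<exists>f. automorphism V E f \<and> f x = y)"

definition weak_kappa :: "'a set \<Rightarrow> ('a \<times> 'a) set \<Rightarrow> nat" where
  "weak_kappa V E = Inf {card (bdry E X) | X. X \<subseteq> V \<and> finite X \<and> X \<noteq> {}}"

definition weak_fragment :: "'a set \<Rightarrow> ('a \<times> 'a) set \<Rightarrow> 'a set \<Rightarrow> bool" where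
  "weak_fragment V E X \<longleftrightarrow> X \<subseteq> V \<and> finite X \<and> X \<noteq> {} \<and> card (bdry E X) = weak_kappa V E"

definition weak_atom :: "'a set \<Rightarrow> ('a \<times> 'a) set \<Rightarrow> 'a set \<Rightarrow> bool" where
  "weak_atom V E X \<longleftrightarrow> weak_fragment V E X \<and> (\<forall>Y. weak_fragment V E Y \<longrightarrow> card X \<le> card Y)"

definition induced_edges :: "('a \<times> 'a) set \<Rightarrow> 'a set \<Rightarrow> ('a \<times> 'a) set" where
  "induced_edges E X = (X \<times> X) \<inter> E"

end

theory Submission
  imports Defs
begin

lemma fin_img:
  assumes "is_relation V E" "locally_finite_rel V E" "X \<subseteq> V" "finite X"
  shows "finite (E `` X)"
proof -
  have "E `` X = (\<Union>x\<in>X. E `` {x})" by (rule Image_eq_UN)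
  thus ?thesis using assms by (auto simp: locally_finite_rel_def)
qed

lemma card_bdry:
  assumes "is_relation V E" "reflexive_rel V E" "locally_finite_rel V E" "X \<subseteq> V" "finite X"
  shows "card (bdry E X) + card X = card (E `` X)" "X \<subseteq> E `` X"
proof -
  show sub: "X \<subseteq> E `` X" using assms(2,4) by (auto simp: reflexive_rel_def)
  have "finite (E `` X)" using fin_img assms by blast
  then show "card (bdry E X) + card X = card (E `` X)"
    using sub card_Diff_subset[of X "E `` X"] card_mono[of "E``X" X] unfolding bdry_def
    by (metis assms(5) le_add_diff_inverse2)
qed

lemma submod:
  assumes "is_relation V E" "reflexive_rel V E" "locally_finite_rel V E"
    "X \<subseteq> V" "finite X" "Y \<subseteq> V" "finite Y"
  shows "card (bdry E (X \<union> Y)) + card (bdry E (X \<inter> Y)) \<le> card (bdry E X) + card (bdry E Y)"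
proof -
  have fX: "finite (E``X)" and fY: "finite (E``Y)" using fin_img assms by blast+
  have u: "E``(X\<union>Y) = E``X \<union> E``Y" by auto
  have i: "E``(X\<inter>Y) \<subseteq> E``X \<inter> E``Y" by auto
  have c1: "card (E``(X\<inter>Y)) \<le> card (E``X \<inter> E``Y)" using i fX by (intro card_mono) auto
  have c2: "card (E``X \<union> E``Y) + card (E``X \<inter> E``Y) = card (E``X) + card (E``Y)"
    using card_Un_Int[OF fX fY] by simp
  have c3: "card (X \<union> Y) + card (X \<inter> Y) = card X + card Y"
    using card_Un_Int[OF assms(5,7)] by simp
  note b1 = card_bdry(1)[OF assms(1-3) assms(4,5)]
  note b2 = card_bdry(1)[OF assms(1-3) assms(6,7)]
  have b3: "card (bdry E (X\<union>Y)) + card (X\<union>Y) = card (E``X \<union> E``Y)"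
    using card_bdry(1)[OF assms(1-3), of "X\<union>Y"] assms u by auto
  have b4: "card (bdry E (X\<inter>Y)) + card (X\<inter>Y) = card (E``(X\<inter>Y))"
    using card_bdry(1)[OF assms(1-3), of "X\<inter>Y"] assms by auto
  show ?thesis using b1 b2 b3 b4 c1 c2 c3 u by linarith
qed

lemma nat_aux: "a+b \<le> k+k \<Longrightarrow> k \<le> a \<Longrightarrow> k \<le> (b::nat) \<Longrightarrow> a = k \<and> b = k" by linarith

lemma kappa_le:
  assumes "X \<subseteq> V" "finite X" "X \<noteq> {}"
  shows "weak_kappa V E \<le> card (bdry E X)"
  unfolding weak_kappa_def using assms by (intro cInf_lower) auto

lemma frag_exists:
  assumes "V \<noteq> {}"
  shows "\<exists>X. weak_fragment V E X"
proof -
  obtain v where "v \<in> V" using assms by auto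
  hence ne: "{card (bdry E X) | X. X \<subseteq> V \<and> finite X \<and> X \<noteq> {}} \<noteq> {}" by blast
  from Inf_nat_def1[OF ne] show ?thesis unfolding weak_fragment_def weak_kappa_def by auto
qed

lemma atom_exists:
  assumes "V \<noteq> {}"
  shows "\<exists>X. weak_atom V E X"
proof -
  let ?S = "{card Y | Y. weak_fragment V E Y}"
  have ne: "?S \<noteq> {}" using frag_exists[OF assms] by blast
  from Inf_nat_def1[OF ne] obtain A where A: "weak_fragment V E A" "card A = Inf ?S" by auto
  have "\<forall>Y. weak_fragment V E Y \<longrightarrow> card A \<le> card Y"
    using A(2) by (auto intro!: cInf_lower)
  thus ?thesis using A unfolding weak_atom_def by blast
qed

lemma aut_img:
  assumes "is_relation V E" "automorphism V E f" "X \<subseteq> V"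
  shows "E `` (f ` X) = f ` (E `` X)"
proof -
  have "E `` (f ` X) = (\<Union>x\<in>X. E `` {f x})" by blast
  also have "\<dots> = (\<Union>x\<in>X. f ` (E `` {x}))" using assms(2,3) unfolding automorphism_def by (auto intro!: SUP_cong)
  also have "\<dots> = f ` (E `` X)" by blast
  finally show ?thesis .
qed

lemma aut_frag:
  assumes "is_relation V E" "automorphism V E f" "weak_fragment V E X"
  shows "weak_fragment V E (f ` X)" "card (f ` X) = card X"
proof -
  have XV: "X \<subseteq> V" using assms(3) unfolding weak_fragment_def by auto
  have inj: "inj_on f V" and im: "f ` V = V" using assms(2) unfolding automorphism_def bij_betw_def by auto
  have EV: "E `` X \<subseteq> V" using assms(1) unfolding is_relation_def by auto
  have "bdry E (f ` X) = f ` (E `` X) - f ` X" using aut_img[OF assms(1,2) XV] by (simp add: bdry_def)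
  also have "\<dots> = f ` (E `` X - X)" by (rule inj_on_image_set_diff[symmetric, OF inj]) (use EV XV in blast)+
  finally have b: "bdry E (f ` X) = f ` bdry E X" unfolding bdry_def .
  have "card (bdry E (f ` X)) = card (bdry E X)" unfolding b
    by (rule card_image) (use inj EV in \<open>auto simp: bdry_def intro: inj_on_subset\<close>)
  moreover show c: "card (f ` X) = card X" using inj XV by (metis card_image inj_on_subset)
  ultimately show "weak_fragment V E (f ` X)" using assms(3) XV im unfolding weak_fragment_def by auto
qed

lemma aut_atom:
  assumes "is_relation V E" "automorphism V E f" "weak_atom V E X"
  shows "weak_atom V E (f ` X)"
  using aut_frag[OF assms(1,2)] assms(3) unfolding weak_atom_def by auto

lemma atom_props: "weak_atom V E A \<Longrightarrow> A \<subseteq> V \<and> A \<noteq> {} \<and> finite A"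
  unfolding weak_atom_def weak_fragment_def by simp

theorem proposition3p1:
  fixes V :: "'a set" and E :: "('a \<times> 'a) set"
  assumes "is_relation V E" and "reflexive_rel V E" and "locally_finite_rel V E"
  shows "(\<forall>F1 F2. weak_fragment V E F1 \<and> weak_fragment V E F2 \<and> F1 \<inter> F2 \<noteq> {} \<longrightarrow>
            weak_fragment V E (F1 \<union> F2) \<and> weak_fragment V E (F1 \<inter> F2))
       \<and> (\<forall>A B. weak_atom V E A \<and> weak_atom V E B \<and> A \<noteq> B \<longrightarrow> A \<inter> B = {})
       \<and> (point_transitive V E \<longrightarrow>
            partition_on V {A. weak_atom V E A}
            \<and> (\<forall>A. weak_atom V E A \<longrightarrow> point_transitive A (induced_edges E A)))"
proof -
  have P1: "weak_fragment V E (F1 \<union> F2) \<and> weak_fragment V E (F1 \<inter> F2)"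
    if f: "weak_fragment V E F1" "weak_fragment V E F2" "F1 \<inter> F2 \<noteq> {}" for F1 F2
  proof -
    have h: "F1 \<subseteq> V" "finite F1" "F2 \<subseteq> V" "finite F2" "F1 \<noteq> {}"
      and k: "card (bdry E F1) = weak_kappa V E" "card (bdry E F2) = weak_kappa V E"
      using f unfolding weak_fragment_def by auto
    note s = submod[OF assms h(1,2,3,4)]
    have l1: "weak_kappa V E \<le> card (bdry E (F1 \<union> F2))" using kappa_le[of "F1 \<union> F2" V E] h by auto
    have l2: "weak_kappa V E \<le> card (bdry E (F1 \<inter> F2))" using kappa_le[of "F1 \<inter> F2" V E] h f(3) by auto
    have "card (bdry E (F1 \<union> F2)) = weak_kappa V E" "card (bdry E (F1 \<inter> F2)) = weak_kappa V E"
      using nat_aux[OF _ l1 l2] s k by auto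
    thus ?thesis using h f(3) unfolding weak_fragment_def by auto
  qed
  have P2: "A \<inter> B = {}" if a: "weak_atom V E A" "weak_atom V E B" "A \<noteq> B" for A B
  proof (rule ccontr)
    assume ne: "A \<inter> B \<noteq> {}"
    have fA: "weak_fragment V E A" and mA: "\<And>Y. weak_fragment V E Y \<Longrightarrow> card A \<le> card Y"
      using a(1) unfolding weak_atom_def by auto
    have fB: "weak_fragment V E B" and mB: "\<And>Y. weak_fragment V E Y \<Longrightarrow> card B \<le> card Y"
      using a(2) unfolding weak_atom_def by auto
    have fr: "weak_fragment V E (A \<inter> B)" using P1[OF fA fB ne] by (rule conjunct2)
    have fin: "finite A" "finite B" using fA fB unfolding weak_fragment_def by simp_all
    have c1: "card A \<le> card (A \<inter> B)" by (rule mA[OF fr])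
    have c2: "card B \<le> card (A \<inter> B)" by (rule mB[OF fr])
    have "A \<inter> B = A" using card_seteq[OF fin(1) _ c1] by blast
    moreover have "A \<inter> B = B" using card_seteq[OF fin(2) _ c2] by blast
    ultimately show False using a(3) by simp
  qed
  have P3: "partition_on V {A. weak_atom V E A} \<and> (\<forall>A. weak_atom V E A \<longrightarrow> point_transitive A (induced_edges E A))"
    if pt: "point_transitive V E"
  proof -
    have cov: "\<exists>A. weak_atom V E A \<and> x \<in> A" if x: "x \<in> V" for x
    proof -
      obtain A where A: "weak_atom V E A" using atom_exists[of V E] x by blast
      then obtain a where a: "a \<in> A" "a \<in> V" using atom_props by blast
      obtain f where f: "automorphism V E f" "f a = x" using pt a x unfolding point_transitive_def by blast
      show ?thesis using aut_atom[OF assms(1) f(1) A] f a by auto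
    qed
    have part: "partition_on V {A. weak_atom V E A}"
      unfolding partition_on_def
    proof (intro conjI)
      show "\<Union> {A. weak_atom V E A} = V"
      proof
        show "\<Union> {A. weak_atom V E A} \<subseteq> V" using atom_props by blast
        show "V \<subseteq> \<Union> {A. weak_atom V E A}"
        proof
          fix x assume "x \<in> V"
          then obtain A where "weak_atom V E A" "x \<in> A" using cov by blast
          thus "x \<in> \<Union> {A. weak_atom V E A}" by blast
        qed
      qed
      show "disjoint {A. weak_atom V E A}" by (rule disjointI) (use P2 in simp)
      show "{} \<notin> {A. weak_atom V E A}" using atom_props by blast
    qed
    have trans: "point_transitive A (induced_edges E A)" if A: "weak_atom V E A" for A
      unfolding point_transitive_def
    proof (intro ballI)
      fix x y assume xy: "x \<in> A" "y \<in> A"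
      have AV: "A \<subseteq> V" using atom_props[OF A] by blast
      obtain f where f: "automorphism V E f" "f x = y" using pt xy AV unfolding point_transitive_def by blast
      have fa: "weak_atom V E (f ` A)" using aut_atom[OF assms(1) f(1) A] .
      have "f ` A = A"
      proof (rule ccontr)
        assume "f ` A \<noteq> A"
        hence "f ` A \<inter> A = {}" using P2[OF fa A] by blast
        moreover have "y \<in> f ` A \<inter> A" using f(2) xy by blast
        ultimately show False by blast
      qed
      have inj: "inj_on f V" using f(1) unfolding automorphism_def bij_betw_def by auto
      have bij: "bij_betw f A A" using \<open>f ` A = A\<close> inj AV unfolding bij_betw_def
        by (auto intro: inj_on_subset)
      have "induced_edges E A `` {f z} = f ` (induced_edges E A `` {z})" if z: "z \<in> A" for z
      proof -
        have r: "induced_edges E A `` {w} = E `` {w} \<inter> A" if "w \<in> A" for w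
          using that unfolding induced_edges_def by auto
        have fz: "f z \<in> A" using z \<open>f ` A = A\<close> by auto
        have EV: "E `` {z} \<subseteq> V" using assms(1) unfolding is_relation_def by auto
        have "E `` {f z} = f ` (E `` {z})" using f(1) z AV unfolding automorphism_def by blast
        hence "E `` {f z} \<inter> A = f ` (E `` {z}) \<inter> f ` A" using \<open>f ` A = A\<close> by simp
        also have "\<dots> = f ` (E `` {z} \<inter> A)" using inj EV AV
          by (simp add: inj_on_image_Int)
        finally show ?thesis using r z fz by simp
      qed
      thus "\<exists>g. automorphism A (induced_edges E A) g \<and> g x = y"
        using bij f(2) unfolding automorphism_def by blast
    qed
    show ?thesis using part trans by blast
  qed
  show ?thesis using P1 P2 P3 by blast
qed

end
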